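(* Let $K$ be an idempotent semifield and $L$ a finite extension of $K$. Then $L$ is archimedean over $K$, i.e. for every $x\in L$ there exists $y\in K$ with $x+y=y$.
   Context: A semifield is a commutative semiring (both operations commutative monoids, distributive law) in which every nonzero element is a unit; it is idempotent if $x+x=x$ for all $x$. An extension of $K$ is a semifield $L$ with an injective homomorphism $K\to L$ (used to identify $K$ with its image); it is finite if $L$ is a finitely generated $K$-semimodule. *)

theory Defs
  imports Main
begin

text \<open>A semifield: a commutative semiring (type class comm_semiring_1, which also
  includes 0 \<noteq> 1) in which every nonzero element is a unit.\<close>
definition semifield :: "'a::comm_semiring_1 itself \<Rightarrow> bool" where
  "semifield _ \<longleftrightarrow> (\<forall>x::'a. x \<noteq> 0 \<longrightarrow> (\<exists>y. x * y = 1))"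

definition idempotent :: "'a::comm_semiring_1 itself \<Rightarrow> bool" where
  "idempotent _ \<longleftrightarrow> (\<forall>x::'a. x + x = x)"

definition semiring_hom :: "('a::comm_semiring_1 \<Rightarrow> 'b::comm_semiring_1) \<Rightarrow> bool" where
  "semiring_hom f \<longleftrightarrow> f 0 = 0 \<and> f 1 = 1 \<and>
     (\<forall>a b. f (a + b) = f a + f b) \<and> (\<forall>a b. f (a * b) = f a * f b)"

definition is_extension :: "('a::comm_semiring_1 \<Rightarrow> 'b::comm_semiring_1) \<Rightarrow> bool" where
  "is_extension f \<longleftrightarrow> semiring_hom f \<and> inj f"

text \<open>Finite extension: L is a finitely generated K-semimodule, where K acts on L by
  c \<cdot> x = f c * x.\<close>
definition finite_extension :: "('a::comm_semiring_1 \<Rightarrow> 'b::comm_semiring_1) \<Rightarrow> bool" where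
  "finite_extension f \<longleftrightarrow> is_extension f \<and>
     (\<exists>G::'b set. finite G \<and> (\<forall>x::'b. \<exists>c::'b \<Rightarrow> 'a. x = (\<Sum>g\<in>G. f (c g) * g)))"

end

theory Submission
  imports Defs
begin

lemma le_trans_idem:
  fixes a b c :: "'l::comm_semiring_1"
  assumes "a + b = b" "b + c = c" shows "a + c = c"
proof -
  have "a + c = a + (b + c)" using assms(2) by simp
  also have "\<dots> = (a + b) + c" by (simp add: add.assoc)
  finally show ?thesis using assms by simp
qed

lemma sum_le_idem:
  fixes h k :: "'g \<Rightarrow> 'l::comm_semiring_1"
  assumes "finite G" "\<forall>g\<in>G. h g + k g = k g"
  shows "sum h G + sum k G = sum k G"
  using assms
proof (induction G rule: finite_induct)
  case empty then show ?case by simp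
next
  case (insert x F)
  then have "h x + k x = k x" "sum h F + sum k F = sum k F" by auto
  then show ?case using insert by (simp add: algebra_simps)
     (metis add.assoc add.commute)
qed

lemma hom_sum:
  assumes "semiring_hom f" "finite G"
  shows "f (sum c G) = (\<Sum>g\<in>G. f (c g))"
  using assms(2)
  by (induction G rule: finite_induct) (use assms(1) in \<open>auto simp: semiring_hom_def\<close>)

lemma idem_sum_le:
  fixes G :: "'l::comm_semiring_1 set"
  assumes "\<forall>x::'l. x + x = x" "finite G" "g \<in> G"
  shows "g + sum id G = sum id G"
proof -
  have "sum id G = g + sum id (G - {g})" using assms by (simp add: sum.remove)
  then show ?thesis using assms(1) by (metis add.assoc)
qed

theorem mainTheorem5:
  fixes f :: "'k::comm_semiring_1 \<Rightarrow> 'l::comm_semiring_1"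
  assumes "semifield TYPE('k)" and "idempotent TYPE('k)"
    and "semifield TYPE('l)"
    and "finite_extension f"
  shows "\<forall>x::'l. \<exists>y::'k. x + f y = f y"
proof
  fix x :: 'l
  have hom: "semiring_hom f" using assms(4) by (simp add: finite_extension_def is_extension_def)
  obtain G :: "'l set" where G: "finite G" "\<forall>x::'l. \<exists>c::'l \<Rightarrow> 'k. x = (\<Sum>g\<in>G. f (c g) * g)"
    using assms(4) by (auto simp: finite_extension_def)
  have k11: "(1::'k) + 1 = 1" using assms(2) by (simp add: idempotent_def)
  have l11: "(1::'l) + 1 = 1" using hom k11 unfolding semiring_hom_def by metis
  have idl: "\<forall>z::'l. z + z = z"
  proof
    fix z :: 'l
    have "z + z = z * (1 + 1)" by (simp only: distrib_left mult_1_right)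
    then show "z + z = z" using l11 by simp
  qed
  define t where "t = 1 + sum id G"
  have gt: "\<forall>g\<in>G. g + t = t"
  proof
    fix g assume "g \<in> G"
    then have "g + sum id G = sum id G" using idem_sum_le[OF idl G(1)] by simp
    then show "g + t = t" unfolding t_def by (metis add.assoc add.commute)
  qed
  have bound: "\<And>z c. z = (\<Sum>g\<in>G. f (c g) * g) \<Longrightarrow> z + f (sum c G) * t = f (sum c G) * t"
  proof -
    fix z c assume z: "z = (\<Sum>g\<in>G. f (c g) * g)"
    have e: "f (sum c G) * t = (\<Sum>g\<in>G. f (c g) * t)"
      using hom_sum[OF hom G(1)] by (simp add: sum_distrib_right)
    have "\<forall>g\<in>G. f (c g) * g + f (c g) * t = f (c g) * t"
      using gt by (metis distrib_left)
    then show "z + f (sum c G) * t = f (sum c G) * t"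
      using sum_le_idem[OF G(1)] z e by simp
  qed
  have one_t: "1 + t = t" unfolding t_def using l11 by (metis add.assoc)
  have tnz: "t \<noteq> 0"
  proof
    assume "t = 0" then have "(1::'l) = 0" using one_t by simp
    then show False by simp
  qed
  obtain u where u: "t * u = 1" using assms(3) tnz by (auto simp: semifield_def)
  obtain d where d: "t * t = (\<Sum>g\<in>G. f (d g) * g)" using G(2) by blast
  have "t * t + f (sum d G) * t = f (sum d G) * t" using bound[OF d] .
  then have "(t * t + f (sum d G) * t) * u = f (sum d G) * t * u" by simp
  then have td: "t + f (sum d G) = f (sum d G)" proof -
    assume h: "(t * t + f (sum d G) * t) * u = f (sum d G) * t * u"
    have "(t * t + f (sum d G) * t) * u = t * (t * u) + f (sum d G) * (t * u)"
      by (simp add: algebra_simps)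
    moreover have "f (sum d G) * t * u = f (sum d G) * (t * u)" by (simp add: mult.assoc)
    ultimately show ?thesis using h u by simp
  qed
  obtain c where c: "x = (\<Sum>g\<in>G. f (c g) * g)" using G(2) by blast
  have x1: "x + f (sum c G) * t = f (sum c G) * t" using bound[OF c] .
  have x2: "f (sum c G) * t + f (sum c G) * f (sum d G) = f (sum c G) * f (sum d G)"
    using td by (metis distrib_left)
  have "x + f (sum c G) * f (sum d G) = f (sum c G) * f (sum d G)"
    using le_trans_idem[OF x1 x2] .
  then show "\<exists>y. x + f y = f y" using hom unfolding semiring_hom_def by metis
qed

end
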